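(* Let $s,q\in\mathbb N$, $c\in\mathbb R^s$, $C:=\mathrm{diag}(c_1,\dots,c_s)$, and let $K_n\in\mathbb R^{s\times s}$ satisfy $$(c^{l-1})^{\mathsf T}K_n=\mathbb 1^{\mathsf T}K_nC^{l-1},\qquad l=1,\dots,q.$$ Then for every $k\in\mathbb N$ the matrices $V_q^{\mathsf T}K_nV_k$ and $\mathcal L_{q,k}(V_q^{\mathsf T}K_nV_k)$ have Hankel form.
   Context: $\mathbb 1\in\mathbb R^s$ is the all-ones vector; powers of vectors are componentwise. $V_k:=(\mathbb 1,c,\dots,c^{k-1})\in\mathbb R^{s\times k}$, $\tilde E_k:=(i\,\delta_{i+1,j})_{i,j=1}^k$, and $\mathcal L_{q,k}(X):=\tilde E_q^{\mathsf T}X+X\tilde E_k$ for $X\in\mathbb R^{q\times k}$. A matrix $X=(x_{ij})$ has Hankel form if $x_{ij}$ depends only on $i+j$. *)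

theory Defs
  imports "Jordan_Normal_Form.Matrix"
begin

text \<open>All matrices use 0-based indices (JNF convention). c is a real vector of dimension s.\<close>

definition vpow :: "real vec \<Rightarrow> nat \<Rightarrow> real vec" where
  "vpow c m = vec (dim_vec c) (\<lambda>i. (c $ i) ^ m)"

definition row_mat :: "real vec \<Rightarrow> real mat" where
  "row_mat v = mat 1 (dim_vec v) (\<lambda>(i,j). v $ j)"

definition diagC :: "real vec \<Rightarrow> real mat" where
  "diagC c = mat (dim_vec c) (dim_vec c) (\<lambda>(i,j). if i = j then c $ i else 0)"

definition Vmat :: "real vec \<Rightarrow> nat \<Rightarrow> real mat" where
  "Vmat c k = mat (dim_vec c) k (\<lambda>(i,j). (c $ i) ^ j)"

text \<open>E~_k = (i delta_{i+1,j})_{i,j=1..k}; in 0-based indices entry (i,j) = i+1 if j = i+1.\<close>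
definition Etil :: "nat \<Rightarrow> real mat" where
  "Etil k = mat k k (\<lambda>(i,j). if j = i + 1 then real (i + 1) else 0)"

definition Lop :: "nat \<Rightarrow> nat \<Rightarrow> real mat \<Rightarrow> real mat" where
  "Lop q k X = transpose_mat (Etil q) * X + X * Etil k"

definition hankel_form :: "real mat \<Rightarrow> bool" where
  "hankel_form X \<longleftrightarrow> (\<forall>i j i' j'. i < dim_row X \<longrightarrow> j < dim_col X \<longrightarrow>
     i' < dim_row X \<longrightarrow> j' < dim_col X \<longrightarrow> i + j = i' + j' \<longrightarrow> X $$ (i,j) = X $$ (i',j'))"

end

theory Submission
  imports Defs
begin

lemma diag_pow: "diagC c ^\<^sub>m n = mat (dim_vec c) (dim_vec c) (\<lambda>(i,j). if i = j then (c $ i) ^ n else 0)"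
proof (induction n)
  case 0
  then show ?case by (auto simp: diagC_def one_mat_def)
next
  case (Suc n)
  have "diagC c ^\<^sub>m Suc n = diagC c ^\<^sub>m n * diagC c" by simp
  also have "\<dots> = mat (dim_vec c) (dim_vec c) (\<lambda>(i,j). if i = j then (c $ i) ^ Suc n else 0)"
    unfolding Suc
  proof (rule eq_matI)
    fix i j assume ij: "i < dim_row (mat (dim_vec c) (dim_vec c) (\<lambda>(i,j). if i = j then (c $ i) ^ Suc n else 0))"
       "j < dim_col (mat (dim_vec c) (dim_vec c) (\<lambda>(i,j). if i = j then (c $ i) ^ Suc n else (0::real)))"
    then have "(mat (dim_vec c) (dim_vec c) (\<lambda>(i,j). if i = j then (c $ i) ^ n else 0) * diagC c) $$ (i,j)
       = (\<Sum>m\<in>{0..<dim_vec c}. (if i = m then (c $ i) ^ n else 0) * (if m = j then c $ m else 0))"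
      by (simp add: diagC_def scalar_prod_def)
    also have "\<dots> = (\<Sum>m\<in>{0..<dim_vec c}. if m = j then (if i = j then (c $ i) ^ Suc n else 0) else 0)"
      by (rule sum.cong) auto
    also have "\<dots> = (if i = j then (c $ i) ^ Suc n else 0)" using ij by simp
    finally show "(mat (dim_vec c) (dim_vec c) (\<lambda>(i,j). if i = j then (c $ i) ^ n else 0) * diagC c) $$ (i,j)
       = mat (dim_vec c) (dim_vec c) (\<lambda>(i,j). if i = j then (c $ i) ^ Suc n else 0) $$ (i,j)"
      using ij by simp
  qed (auto simp: diagC_def)
  finally show ?case .
qed

lemma sum_delta_r: "finite A \<Longrightarrow> (\<Sum>m\<in>A. f m * (if m = b then x m else 0)) = (if b \<in> A then f b * x b else (0::real))"
  by (simp add: if_distrib sum.delta cong: if_cong)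

lemma hyp_entry:
  assumes "dim_vec c = s" "K \<in> carrier_mat s s" "b < s"
    and "row_mat (vpow c i) * K = row_mat (vec s (\<lambda>_. 1)) * K * (diagC c ^\<^sub>m i)"
  shows "(\<Sum>a\<in>{0..<s}. c$a^i * K$$(a,b)) = (\<Sum>a\<in>{0..<s}. K$$(a,b)) * c$b^i"
proof -
  have "(row_mat (vpow c i) * K) $$ (0,b) = (row_mat (vec s (\<lambda>_. 1)) * K * (diagC c ^\<^sub>m i)) $$ (0,b)"
    using assms(4) by (rule arg_cong)
  moreover have "(row_mat (vpow c i) * K) $$ (0,b) = (\<Sum>a\<in>{0..<s}. c$a^i * K$$(a,b))"
    using assms(1-3) by (simp add: row_mat_def vpow_def scalar_prod_def)
  moreover have "(row_mat (vec s (\<lambda>_. 1)) * K * (diagC c ^\<^sub>m i)) $$ (0,b) = (\<Sum>a\<in>{0..<s}. K$$(a,b)) * c$b^i"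
    using assms(1-3) by (simp add: row_mat_def diag_pow scalar_prod_def sum_delta_r)
  ultimately show ?thesis by simp
qed

lemma X_entry:
  assumes "dim_vec c = s" "K \<in> carrier_mat s s" "i < q" "j < k"
  shows "(transpose_mat (Vmat c q) * K * Vmat c k) $$ (i,j)
     = (\<Sum>b\<in>{0..<s}. (\<Sum>a\<in>{0..<s}. c$a^i * K$$(a,b)) * c$b^j)"
  using assms by (simp add: Vmat_def scalar_prod_def sum_distrib_right mult.commute mult.left_commute)

lemma sum_shift:
  assumes "i < q"
  shows "(\<Sum>m\<in>{0..<q}. (if i = m+1 then real (m+1) else 0) * f m) = real i * f (i - 1)"
proof (cases i)
  case 0
  then show ?thesis by simp
next
  case (Suc i')
  have "(\<Sum>m\<in>{0..<q}. (if i = m+1 then real (m+1) else 0) * f m)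
      = (\<Sum>m\<in>{0..<q}. if m = i' then real (m+1) * f m else 0)"
    by (rule sum.cong) (auto simp: Suc)
  also have "\<dots> = real i * f (i - 1)" using assms Suc by (simp add: sum.delta')
  finally show ?thesis .
qed

lemma sum_shift2:
  assumes "j < k"
  shows "(\<Sum>m\<in>{0..<k}. f m * (if j = m+1 then real (m+1) else 0)) = real j * f (j - 1)"
  using sum_shift[OF assms, of f] by (simp add: mult.commute)

theorem lemma4p4:
  fixes s q :: nat and c :: "real vec" and K :: "real mat"
  assumes "dim_vec c = s"
    and "K \<in> carrier_mat s s"
    and "\<forall>l\<in>{1..q}. row_mat (vpow c (l - 1)) * K
            = row_mat (vec s (\<lambda>_. 1)) * K * (diagC c ^\<^sub>m (l - 1))"
  shows "\<forall>k::nat. hankel_form (transpose_mat (Vmat c q) * K * Vmat c k)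
           \<and> hankel_form (Lop q k (transpose_mat (Vmat c q) * K * Vmat c k))"
proof
  fix k
  define X where "X = transpose_mat (Vmat c q) * K * Vmat c k"
  define g where "g n = (\<Sum>b\<in>{0..<s}. (\<Sum>a\<in>{0..<s}. K$$(a,b)) * c$b^n)" for n
  have dX: "X \<in> carrier_mat q k" using assms(1,2) unfolding X_def Vmat_def by (intro mult_carrier_mat[of _ q s] transpose_carrier_mat) auto
  have Xe: "X $$ (i,j) = g (i+j)" if "i < q" "j < k" for i j
  proof -
    have h: "row_mat (vpow c i) * K = row_mat (vec s (\<lambda>_. 1)) * K * (diagC c ^\<^sub>m i)"
      using assms(3)[rule_format, of "Suc i"] that by simp
    have "X $$ (i,j) = (\<Sum>b\<in>{0..<s}. (\<Sum>a\<in>{0..<s}. c$a^i * K$$(a,b)) * c$b^j)"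
      unfolding X_def by (rule X_entry[OF assms(1,2) that])
    also have "\<dots> = (\<Sum>b\<in>{0..<s}. (\<Sum>a\<in>{0..<s}. K$$(a,b)) * c$b^i * c$b^j)"
      by (rule sum.cong) (auto simp: hyp_entry[OF assms(1,2) _ h])
    also have "\<dots> = g (i+j)" unfolding g_def by (simp add: power_add mult.assoc)
    finally show ?thesis .
  qed
  have H1: "hankel_form X" using dX Xe unfolding hankel_form_def by auto
  have Le: "Lop q k X $$ (i,j) = real (i+j) * g (i+j-1)" if "i < q" "j < k" for i j
  proof -
    have "(transpose_mat (Etil q) * X) $$ (i,j) = (\<Sum>m\<in>{0..<q}. (if i = m+1 then real (m+1) else 0) * X $$ (m,j))"
      using that dX by (simp add: Etil_def scalar_prod_def)
    also have "\<dots> = real i * X $$ (i-1,j)" by (rule sum_shift[OF that(1)])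
    also have "\<dots> = real i * g (i+j-1)" using that Xe[of "i-1" j] by (cases i) auto
    finally have A: "(transpose_mat (Etil q) * X) $$ (i,j) = real i * g (i+j-1)" .
    have "(X * Etil k) $$ (i,j) = (\<Sum>m\<in>{0..<k}. X $$ (i,m) * (if j = m+1 then real (m+1) else 0))"
      using that dX by (simp add: Etil_def scalar_prod_def)
    also have "\<dots> = real j * X $$ (i,j-1)" by (rule sum_shift2[OF that(2)])
    also have "\<dots> = real j * g (i+j-1)" using that Xe[of i "j-1"] by (cases j) auto
    finally have B: "(X * Etil k) $$ (i,j) = real j * g (i+j-1)" .
    show ?thesis using A B that dX by (simp add: Lop_def Etil_def algebra_simps)
  qed
  have dL: "Lop q k X \<in> carrier_mat q k" using dX by (simp add: Lop_def Etil_def)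
  have H2: "hankel_form (Lop q k X)" using dL Le unfolding hankel_form_def by auto
  show "hankel_form (transpose_mat (Vmat c q) * K * Vmat c k)
           \<and> hankel_form (Lop q k (transpose_mat (Vmat c q) * K * Vmat c k))"
    using H1 H2 by (simp add: X_def)
qed

end
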